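(* Let $\{A_{1C},\dots,A_{qC}\}$ be a $PComS(n,q,c)$. Then $$\sum_{i=1}^{q}l(A_i)=\frac{nq-c}{2},\qquad \sum_{i=1}^{q}\mathcal{N}_{A_i}(R_1)=\frac{nq-c}{4},$$ and for every $k$ with $2\le k\le n-2$, $$\sum_{i=1}^{q}\mathcal{N}_{A_i}(R_k)=\sum_{i=1}^{q}\ \sum_{\substack{i_1+\cdots+i_r=k\\ 1<r\le k}}(-1)^{r}\,\mathcal{N}_{A_i}(R_{i_1}\cdots R_{i_r}),$$ where the inner sum runs over all compositions $(i_1,\dots,i_r)$ of $k$ with $r\ge2$ parts.
   Context: Sequences $X=(x_0,\dots,x_{n-1})\in\mathbb{Z}_2^n$ have entries in $\{+1,-1\}$ and are regarded as periodic (indices mod $n$). The periodic autocorrelation is $\mathsf{P}_X(k)=\sum_{i=0}^{n-1}x_ix_{i+k}$; it depends only on the cyclic-shift class $X_C$. A $PComS(n,q,c)$ is a list (repetitions allowed) of $q$ cyclic-shift classes $A_{1C},\dots,A_{qC}$ with $A_i\in\mathbb{Z}_2^n$ such that $\sum_{i=1}^q\mathsf{P}_{A_i}(k)=c$ for all $1\le k\le n-1$. A run of $X$ is a maximal block of cyclically consecutive equal entries; $l(X)=\#\{i:x_i\ne x_{i+1\bmod n}\}$ is the number of runs ($0$ for constant $X$). For positive integers $i_1,\dots,i_r$, a run string of type $R_{i_1}\cdots R_{i_r}$ is a sequence of $r$ cyclically consecutive runs of lengths $i_1,\dots,i_r$ in this order, and $\mathcal{N}_X(R_{i_1}\cdots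 R_{i_r})$ is the number of such run strings in $X$ (counted by starting run); these quantities depend only on the class $X_C$. *)

theory Defs
  imports Complex_Main
begin

text \<open>A sequence in Z_2^n is represented by a function X :: nat => int whose entries
  X 0, ..., X (n-1) are +1 or -1; indices are taken mod n.  All quantities below
  are invariant under cyclic shift, so a cyclic-shift class is represented by any
  representative.\<close>

definition pm1_seq :: "nat \<Rightarrow> (nat \<Rightarrow> int) \<Rightarrow> bool" where
  "pm1_seq n X \<longleftrightarrow> (\<forall>i<n. X i = 1 \<or> X i = -1)"

definition paut :: "nat \<Rightarrow> (nat \<Rightarrow> int) \<Rightarrow> nat \<Rightarrow> int" where
  "paut n X k = (\<Sum>i<n. X i * X ((i + k) mod n))"

text \<open>PComS(n,q,c): the q sequences A 1, ..., A q (repetitions allowed).\<close>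
definition is_PComS :: "nat \<Rightarrow> nat \<Rightarrow> int \<Rightarrow> (nat \<Rightarrow> nat \<Rightarrow> int) \<Rightarrow> bool" where
  "is_PComS n q c A \<longleftrightarrow>
     (\<forall>i\<in>{1..q}. pm1_seq n (A i)) \<and>
     (\<forall>k\<in>{1..n-1}. (\<Sum>i=1..q. paut n (A i) k) = c)"

definition nruns :: "nat \<Rightarrow> (nat \<Rightarrow> int) \<Rightarrow> nat" where
  "nruns n X = card {i. i < n \<and> X i \<noteq> X ((i + 1) mod n)}"

definition run_starts :: "nat \<Rightarrow> (nat \<Rightarrow> int) \<Rightarrow> nat list" where
  "run_starts n X = sorted_list_of_set {i. i < n \<and> X ((i + n - 1) mod n) \<noteq> X i}"

definition run_len :: "nat \<Rightarrow> (nat \<Rightarrow> int) \<Rightarrow> nat \<Rightarrow> nat" where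
  "run_len n X j = (let s = run_starts n X; m = length s in
      ((s ! ((j + 1) mod m) + n - s ! j - 1) mod n) + 1)"

text \<open>N_X(R_{i_1} ... R_{i_r}): number of starting runs j such that the runs
  j, j+1, ..., j+r-1 (cyclically) have lengths i_1, ..., i_r.\<close>
definition run_count :: "nat \<Rightarrow> (nat \<Rightarrow> int) \<Rightarrow> nat list \<Rightarrow> nat" where
  "run_count n X rs = (let m = length (run_starts n X) in
     card {j. j < m \<and> (\<forall>t<length rs. run_len n X ((j + t) mod m) = rs ! t)})"

definition compositions_ge2 :: "nat \<Rightarrow> nat list set" where
  "compositions_ge2 k = {cs. (\<forall>x\<in>set cs. 0 < x) \<and> sum_list cs = k \<and>
                              2 \<le> length cs \<and> length cs \<le> k}"

end

theory Submission
  imports Defs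
begin

definition Xp :: "nat \<Rightarrow> (nat \<Rightarrow> int) \<Rightarrow> nat \<Rightarrow> int" where
  "Xp n X t = X (t mod n)"

definition chg :: "nat \<Rightarrow> (nat \<Rightarrow> int) \<Rightarrow> nat \<Rightarrow> bool" where
  "chg n X t \<longleftrightarrow> Xp n X (t + n - 1) \<noteq> Xp n X t"

lemma sum_shift1:
  fixes g :: "nat \<Rightarrow> int"
  assumes "\<And>t. g (t + n) = g t"
  shows "(\<Sum>i<n. g (i + 1)) = (\<Sum>i<n. g i)"
proof -
  have "(\<Sum>i<Suc n. g i) = g 0 + (\<Sum>i<n. g (Suc i))" by (rule sum.lessThan_Suc_shift)
  moreover have "(\<Sum>i<Suc n. g i) = (\<Sum>i<n. g i) + g n" by simp
  moreover have "g n = g 0" using assms[of 0] by simp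
  ultimately show ?thesis by simp
qed

lemma sum_shift:
  fixes g :: "nat \<Rightarrow> int"
  assumes "\<And>t. g (t + n) = g t"
  shows "(\<Sum>i<n. g (i + a)) = (\<Sum>i<n. g i)"
proof (induction a)
  case 0 then show ?case by simp
next
  case (Suc a)
  have e: "(\<lambda>t. g (t + a)) (t + n) = (\<lambda>t. g (t + a)) t" for t
    using assms[of "t + a"] by (simp add: add.commute add.left_commute)
  have "(\<Sum>i<n. g (i + 1 + a)) = (\<Sum>i<n. g (i + a))"
    using sum_shift1[where g="\<lambda>t. g (t + a)", OF e] by simp
  then have "(\<Sum>i<n. g (i + Suc a)) = (\<Sum>i<n. g (i + a))" by simp
  then show ?case using Suc by simp
qed

lemma Xp_per: "Xp n X (t + n) = Xp n X t"
  by (simp add: Xp_def)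

lemma Xp_pm:
  assumes "pm1_seq n X" "0 < n"
  shows "Xp n X t = 1 \<or> Xp n X t = -1"
  using assms unfolding pm1_seq_def Xp_def by auto

lemma paut_Xp: "paut n X k = (\<Sum>i<n. Xp n X i * Xp n X (i + k))"
  unfolding paut_def Xp_def by (intro sum.cong) auto

lemma chg_per: "chg n X (t + n) = chg n X t"
  unfolding chg_def using Xp_per[of n X t] Xp_per[of n X "t + n - 1"]
  by (cases n) (simp_all add: ac_simps)

lemma chg_Suc: "0 < n \<Longrightarrow> chg n X (Suc t) \<longleftrightarrow> Xp n X t \<noteq> Xp n X (Suc t)"
  unfolding chg_def using Xp_per[of n X t]
  by (simp add: add.commute)

lemma second_diff:
  assumes "pm1_seq n X" "0 < n" "1 \<le> k"
  shows "4 * (\<Sum>i<n. if chg n X i \<and> chg n X (i + k) then Xp n X i * Xp n X (i + k) else 0)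
       = 2 * paut n X k - paut n X (k + 1) - paut n X (k - 1)"
proof -
  let ?x = "Xp n X"
  define h where "h t = (if chg n X t \<and> chg n X (t + k) then 4 * (?x t * ?x (t + k)) else 0)" for t
  have hper: "h (t + n) = h t" for t
    unfolding h_def using chg_per[of n X t] chg_per[of n X "t+k"] Xp_per[of n X t] Xp_per[of n X "t+k"]
    by (simp add: ac_simps)
  have pw: "(?x i - ?x (i + 1)) * (?x (i + k) - ?x (i + k + 1)) = h (i + 1)" for i
  proof -
    have c1: "chg n X (i + 1) \<longleftrightarrow> ?x i \<noteq> ?x (i + 1)" using chg_Suc[OF assms(2)] by simp
    have c2: "chg n X (i + 1 + k) \<longleftrightarrow> ?x (i + k) \<noteq> ?x (i + k + 1)"
      using chg_Suc[OF assms(2), of X "i + k"] by (simp add: add.commute add.left_commute)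
    show ?thesis using Xp_pm[OF assms(1,2), of i] Xp_pm[OF assms(1,2), of "i+1"]
      Xp_pm[OF assms(1,2), of "i+k"] Xp_pm[OF assms(1,2), of "i+k+1"] c1 c2
      unfolding h_def by (auto simp: algebra_simps)
  qed
  have "(\<Sum>i<n. (?x i - ?x (i + 1)) * (?x (i + k) - ?x (i + k + 1))) = (\<Sum>i<n. h (i + 1))"
    using pw by simp
  also have "\<dots> = (\<Sum>i<n. h i)" by (rule sum_shift1[where g=h, OF hper])
  finally have A: "(\<Sum>i<n. (?x i - ?x (i + 1)) * (?x (i + k) - ?x (i + k + 1))) = (\<Sum>i<n. h i)" .
  define g where "g t = ?x t * ?x (t + (k - 1))" for t
  have gper: "g (t + n) = g t" for t unfolding g_def using Xp_per[of n X t] Xp_per[of n X "t + (k-1)"]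
    by (simp add: ac_simps)
  have B: "(\<Sum>i<n. ?x (i + 1) * ?x (i + k)) = paut n X (k - 1)"
  proof -
    have "(\<Sum>i<n. ?x (i + 1) * ?x (i + k)) = (\<Sum>i<n. g (i + 1))"
      unfolding g_def using assms(3) by (intro sum.cong) auto
    also have "\<dots> = (\<Sum>i<n. g i)" by (rule sum_shift1[where g=g, OF gper])
    finally show ?thesis unfolding g_def paut_Xp .
  qed
  have C: "(\<Sum>i<n. ?x (i + 1) * ?x (i + k + 1)) = paut n X k"
  proof -
    have "(\<Sum>i<n. ?x (i + 1) * ?x (i + k + 1)) = (\<Sum>i<n. (\<lambda>t. ?x t * ?x (t + k)) (i + 1))"
      by (simp add: add.commute add.left_commute)
    also have "\<dots> = (\<Sum>i<n. ?x i * ?x (i + k))"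
    proof (rule sum_shift1[where g="\<lambda>t. ?x t * ?x (t + k)"])
      fix t
      show "?x (t + n) * ?x (t + n + k) = ?x t * ?x (t + k)"
        using Xp_per[of n X "t+k"] Xp_per[of n X t] by (simp add: add.commute add.left_commute)
    qed
    finally show ?thesis unfolding paut_Xp .
  qed
  have "(\<Sum>i<n. (?x i - ?x (i + 1)) * (?x (i + k) - ?x (i + k + 1)))
     = (\<Sum>i<n. ?x i * ?x (i + k)) - (\<Sum>i<n. ?x i * ?x (i + (k + 1)))
       - (\<Sum>i<n. ?x (i + 1) * ?x (i + k)) + (\<Sum>i<n. ?x (i + 1) * ?x (i + k + 1))"
    by (simp add: algebra_simps sum.distrib sum_subtractf)
  also have "\<dots> = 2 * paut n X k - paut n X (k + 1) - paut n X (k - 1)"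
    using B C unfolding paut_Xp by simp
  finally have D: "(\<Sum>i<n. h i) = 2 * paut n X k - paut n X (k + 1) - paut n X (k - 1)"
    using A by simp
  show ?thesis unfolding D[symmetric] h_def sum_distrib_left
    by (intro sum.cong) auto
qed

lemma sign_lemma:
  assumes "pm1_seq n X" "0 < n"
  shows "Xp n X i * Xp n X (i + k) = (-1) ^ card {t. i < t \<and> t \<le> i + k \<and> chg n X t}"
proof (induction k)
  case 0
  have e: "{t. i < t \<and> t \<le> i \<and> chg n X t} = {}" by auto
  have c0: "card {t. i < t \<and> t \<le> i \<and> chg n X t} = 0" by (simp only: e card.empty)
  have sq: "Xp n X i * Xp n X i = 1" using Xp_pm[OF assms, of i] by auto
  show ?case by (simp only: add_0_right c0 power_0 sq)
next
  case (Suc k)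
  have S: "{t. i < t \<and> t \<le> i + Suc k \<and> chg n X t} =
      {t. i < t \<and> t \<le> i + k \<and> chg n X t} \<union> (if chg n X (Suc (i + k)) then {Suc (i + k)} else {})"
    by (auto simp: le_Suc_eq)
  have fin: "finite {t. i < t \<and> t \<le> i + k \<and> chg n X t}" by (rule finite_subset[of _ "{..i+k}"]) auto
  show ?case
  proof (cases "chg n X (Suc (i + k))")
    case True
    then have "Xp n X (i + Suc k) = - Xp n X (i + k)"
      using chg_Suc[OF assms(2)] Xp_pm[OF assms, of "i+k"] Xp_pm[OF assms, of "Suc (i+k)"] by auto
    moreover have "card {t. i < t \<and> t \<le> i + Suc k \<and> chg n X t} = Suc (card {t. i < t \<and> t \<le> i + k \<and> chg n X t})"
      unfolding S using True fin by simp
    ultimately show ?thesis using Suc by simp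
  next
    case False
    then have "Xp n X (i + Suc k) = Xp n X (i + k)"
      using chg_Suc[OF assms(2)] by auto
    moreover have "{t. i < t \<and> t \<le> i + Suc k \<and> chg n X t} = {t. i < t \<and> t \<le> i + k \<and> chg n X t}"
      using False by (auto, metis le_SucE)
    ultimately show ?thesis using Suc by simp
  qed
qed

definition cset :: "nat \<Rightarrow> (nat \<Rightarrow> int) \<Rightarrow> nat set" where
  "cset n X = {i. i < n \<and> X ((i + n - 1) mod n) \<noteq> X i}"

definition pp :: "nat \<Rightarrow> (nat \<Rightarrow> int) \<Rightarrow> nat \<Rightarrow> nat" where
  "pp n X j = (let s = run_starts n X; m = length s in s ! (j mod m) + n * (j div m))"

lemma cset_fin: "finite (cset n X)"
  unfolding cset_def by auto

lemma chg_iff: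
  assumes "0 < n"
  shows "chg n X t \<longleftrightarrow> t mod n \<in> cset n X"
proof -
  have "(t + (n - 1)) mod n = (t mod n + (n - 1)) mod n"
    by (simp add: mod_add_left_eq)
  moreover have "t + n - 1 = t + (n - 1)" "t mod n + n - 1 = t mod n + (n - 1)" using assms by auto
  ultimately have "(t + n - 1) mod n = (t mod n + n - 1) mod n" by simp
  then show ?thesis unfolding chg_def cset_def Xp_def using assms by simp
qed

lemma rs_props:
  shows "sorted_wrt (<) (run_starts n X)" "set (run_starts n X) = cset n X"
    "distinct (run_starts n X)" "length (run_starts n X) = card (cset n X)"
  unfolding run_starts_def cset_def[symmetric]
  using cset_fin[of n X] by auto

lemma rs_lt: "x \<in> set (run_starts n X) \<Longrightarrow> x < n"
  using rs_props(2) unfolding cset_def by auto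

lemma rs_nth_less:
  assumes "a < b" "b < length (run_starts n X)"
  shows "run_starts n X ! a < run_starts n X ! b"
  using rs_props(1) assms by (simp add: sorted_wrt_iff_nth_less)

lemma rs_nth_lt_n:
  assumes "a < length (run_starts n X)"
  shows "run_starts n X ! a < n"
  using rs_lt assms nth_mem by blast

lemma aux_mod: "(x::nat) < y \<Longrightarrow> y < n \<Longrightarrow> Suc ((y + n - Suc x) mod n) = y - x"
proof -
  assume a: "x < y" "y < n"
  then obtain d where d: "y = Suc x + d" using less_imp_Suc_add by blast
  have "y + n - Suc x = d + n" using d by simp
  moreover have "d < n" using a d by simp
  ultimately show ?thesis using d by simp
qed

lemma pp_step:
  assumes "0 < n" "0 < length (run_starts n X)"
  shows "pp n X (Suc j) = pp n X j + run_len n X (j mod length (run_starts n X))"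
proof -
  define s where "s = run_starts n X"
  define m where "m = length s"
  have m0: "0 < m" using assms unfolding m_def s_def by simp
  define a where "a = j mod m"
  have am: "a < m" unfolding a_def using m0 by simp
  have rl: "run_len n X a = ((s ! ((a + 1) mod m) + n - s ! a - 1) mod n) + 1"
    unfolding run_len_def s_def m_def Let_def by simp
  show ?thesis
  proof (cases "Suc a = m")
    case True
    have e1: "Suc j mod m = 0" "Suc j div m = Suc (j div m)"
      using True unfolding a_def by (simp_all add: mod_Suc div_Suc)
    have "s ! 0 \<le> s ! a"
      using rs_nth_less[of 0 a n X] am unfolding s_def m_def by (cases "a = 0") auto
    moreover have "s ! a < n" using rs_nth_lt_n am unfolding s_def m_def by blast
    moreover have "(a + 1) mod m = 0" using True by simp
    ultimately have "run_len n X a = s ! 0 + n - s ! a"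
      using rl by simp
    then show ?thesis
      unfolding pp_def Let_def s_def[symmetric] m_def[symmetric] a_def[symmetric] e1
      using \<open>s ! a < n\<close> a_def by simp
  next
    case False
    then have sam: "Suc a < m" using am by simp
    have e1: "Suc j mod m = Suc a" "Suc j div m = j div m"
      using False unfolding a_def by (simp_all add: mod_Suc div_Suc)
    have "s ! a < s ! Suc a" using rs_nth_less[of a "Suc a" n X] sam unfolding s_def m_def by simp
    moreover have "s ! Suc a < n" using rs_nth_lt_n sam unfolding s_def m_def by blast
    moreover have "(a + 1) mod m = Suc a" using sam by simp
    ultimately have "run_len n X a = s ! Suc a - s ! a"
      using rl aux_mod by simp
    then show ?thesis
      unfolding pp_def Let_def s_def[symmetric] m_def[symmetric] a_def[symmetric] e1
      using \<open>s ! a < s ! Suc a\<close> a_def by simp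
  qed
qed

lemma run_len_pos: "0 < run_len n X j"
  unfolding run_len_def Let_def by simp

lemma pp_mono:
  assumes "0 < n" "0 < length (run_starts n X)"
  shows "strict_mono (pp n X)"
  unfolding strict_mono_Suc_iff using pp_step[OF assms] run_len_pos by simp

lemma pp_small:
  assumes "j < length (run_starts n X)"
  shows "pp n X j = run_starts n X ! j"
  unfolding pp_def Let_def using assms by simp

lemma pp_range:
  assumes "0 < n" "0 < length (run_starts n X)"
  shows "chg n X t \<longleftrightarrow> t \<in> range (pp n X)"
proof
  define s where "s = run_starts n X"
  define m where "m = length s"
  assume "chg n X t"
  then have "t mod n \<in> set s" using chg_iff[OF assms(1)] rs_props(2) unfolding s_def by blast
  then obtain a where a: "a < m" "s ! a = t mod n" unfolding m_def by (auto simp: in_set_conv_nth)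
  have "pp n X (a + m * (t div n)) = t"
    unfolding pp_def Let_def s_def[symmetric] m_def[symmetric] using a by simp
  then show "t \<in> range (pp n X)" by (metis rangeI)
next
  define s where "s = run_starts n X"
  define m where "m = length s"
  assume "t \<in> range (pp n X)"
  then obtain j where j: "t = pp n X j" by auto
  have m0: "0 < m" using assms unfolding m_def s_def by simp
  have "s ! (j mod m) < n" using rs_nth_lt_n m0 unfolding s_def m_def by simp
  then have "t mod n = s ! (j mod m)" unfolding j pp_def Let_def s_def[symmetric] m_def[symmetric]
    by simp
  moreover have "s ! (j mod m) \<in> set s" using m0 unfolding m_def by simp
  ultimately show "chg n X t" using chg_iff[OF assms(1)] rs_props(2) unfolding s_def by metis
qed

lemma run_count_pp:
  assumes "0 < n" "0 < length (run_starts n X)"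
  shows "run_count n X rs = card {j. j < length (run_starts n X) \<and>
           (\<forall>t<length rs. pp n X (j + t + 1) - pp n X (j + t) = rs ! t)}"
  unfolding run_count_def Let_def using pp_step[OF assms] by simp

definition comps :: "nat \<Rightarrow> nat list set" where
  "comps k = {rs. (\<forall>x\<in>set rs. 0 < x) \<and> sum_list rs = k}"

lemma len_le_sum: "(\<forall>x\<in>set rs. 0 < x) \<Longrightarrow> length rs \<le> sum_list (rs :: nat list)"
  by (induction rs) auto

lemma comps_fin: "finite (comps k)"
proof (rule finite_subset)
  show "comps k \<subseteq> {xs. set xs \<subseteq> {..k} \<and> length xs \<le> k}"
    unfolding comps_def using len_le_sum member_le_sum_list by fastforce
  show "finite {xs. set xs \<subseteq> {..k} \<and> length xs \<le> k}"
    by (rule finite_lists_length_le) simp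
qed

lemma comps_split: assumes k: "0 < k" shows "comps k = insert [k] (compositions_ge2 k)"
  proof
    show "comps k \<subseteq> insert [k] (compositions_ge2 k)"
    proof
      fix rs assume rs: "rs \<in> comps k"
      then have p: "\<forall>x\<in>set rs. 0 < x" "sum_list rs = k" unfolding comps_def by auto
      have "length rs \<le> k" using len_le_sum[OF p(1)] p(2) by simp
      consider "rs = []" | x where "rs = [x]" | x y zs where "rs = x # y # zs"
        by (metis list.exhaust)
      then show "rs \<in> insert [k] (compositions_ge2 k)"
      proof cases
        case 1 then show ?thesis using p k by simp
      next
        case 2 then show ?thesis using p by simp
      next
        case 3 then show ?thesis using p \<open>length rs \<le> k\<close> unfolding compositions_ge2_def by simp
      qed
    qed
    show "insert [k] (compositions_ge2 k) \<subseteq> comps k"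
      using k unfolding comps_def compositions_ge2_def by auto
  qed

lemma match_sum:
  assumes "\<forall>t<length rs. pp n X (j + t + 1) - pp n X (j + t) = rs ! t"
    and "strict_mono (pp n X)"
  shows "pp n X (j + length rs) = pp n X j + sum_list rs"
  using assms(1)
proof (induction rs arbitrary: j)
  case Nil then show ?case by simp
next
  case (Cons x xs)
  have x: "pp n X (j + 1) - pp n X j = x" using Cons.prems[rule_format, of 0] by simp
  have lt: "pp n X j < pp n X (j + 1)" using assms(2) by (simp add: strict_mono_def)
  have "\<forall>t<length xs. pp n X (j + 1 + t + 1) - pp n X (j + 1 + t) = xs ! t"
  proof (intro allI impI)
    fix t assume "t < length xs"
    then show "pp n X (j + 1 + t + 1) - pp n X (j + 1 + t) = xs ! t"
      using Cons.prems[rule_format, of "Suc t"] by (simp add: add.commute add.left_commute)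
  qed
  from Cons.IH[OF this] have "pp n X (j + 1 + length xs) = pp n X (j + 1) + sum_list xs" .
  then show ?case using x lt by simp
qed

lemma inner:
  assumes n: "0 < n" and m: "0 < length (run_starts n X)" and k: "0 < k"
  shows "(\<Sum>rs\<in>comps k. if (\<forall>t<length rs. pp n X (j + t + 1) - pp n X (j + t) = rs ! t)
            then (-1::int) ^ length rs else 0)
       = (if chg n X (pp n X j + k) then (-1) ^ card {t. pp n X j < t \<and> t \<le> pp n X j + k \<and> chg n X t} else 0)"
proof -
  let ?p = "pp n X"
  let ?M = "\<lambda>rs. \<forall>t<length rs. ?p (j + t + 1) - ?p (j + t) = rs ! t"
  have sm: "strict_mono ?p" using pp_mono[OF n m] .
  have inj: "inj ?p" using sm strict_mono_imp_inj_on by blast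
  have S: "(\<Sum>rs\<in>comps k. if ?M rs then (-1::int) ^ length rs else 0)
         = (\<Sum>rs\<in>{rs\<in>comps k. ?M rs}. (-1::int) ^ length rs)"
    using comps_fin by (simp add: sum.inter_filter)
  show ?thesis
  proof (cases "chg n X (?p j + k)")
    case True
    then obtain b where b: "?p b = ?p j + k" using pp_range[OF n m] by (metis rangeE)
    have jb: "j < b" using b k sm by (metis less_add_same_cancel1 strict_mono_less)
    define r where "r = b - j"
    define L where "L = map (\<lambda>t. ?p (j + t + 1) - ?p (j + t)) [0..<r]"
    have HML: "?M L" unfolding L_def by simp
    have lenL: "length L = r" unfolding L_def by simp
    have set1: "{rs\<in>comps k. ?M rs} = {L}"
    proof
      show "{rs\<in>comps k. ?M rs} \<subseteq> {L}"
      proof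
        fix rs assume rs: "rs \<in> {rs\<in>comps k. ?M rs}"
        then have "?p (j + length rs) = ?p j + k"
          using match_sum[OF _ sm, of rs j] unfolding comps_def by auto
        then have "j + length rs = b" using b inj by (metis injD)
        then have lr: "length rs = r" unfolding r_def by simp
        have "rs = L"
          by (rule nth_equalityI) (use lr lenL rs in \<open>auto simp: L_def\<close>)
        then show "rs \<in> {L}" by simp
      qed
      show "{L} \<subseteq> {rs\<in>comps k. ?M rs}"
      proof -
        have pos: "\<forall>x\<in>set L. 0 < x" unfolding L_def using sm
          by (auto simp: strict_mono_def)
        have "?p (j + length L) = ?p j + sum_list L" using match_sum[OF HML sm] .
        then have "sum_list L = k" using lenL b jb unfolding r_def by simp
        then show ?thesis using pos HML unfolding comps_def by auto
      qed
    qed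
    have cardeq: "card {t. ?p j < t \<and> t \<le> ?p j + k \<and> chg n X t} = r"
    proof -
      have "{t. ?p j < t \<and> t \<le> ?p j + k \<and> chg n X t} = ?p ` {j<..b}"
      proof
        show "{t. ?p j < t \<and> t \<le> ?p j + k \<and> chg n X t} \<subseteq> ?p ` {j<..b}"
        proof
          fix t assume t: "t \<in> {t. ?p j < t \<and> t \<le> ?p j + k \<and> chg n X t}"
          then obtain j' where j': "t = ?p j'" using pp_range[OF n m] by auto
          have "j < j'" using t j' sm by (simp add: strict_mono_less)
          moreover have "?p j' \<le> ?p b" using t j' b by simp
          then have "j' \<le> b" using sm by (simp add: strict_mono_less_eq)
          ultimately show "t \<in> ?p ` {j<..b}" using j' by auto
        qed
        show "?p ` {j<..b} \<subseteq> {t. ?p j < t \<and> t \<le> ?p j + k \<and> chg n X t}"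
        proof
          fix t assume "t \<in> ?p ` {j<..b}"
          then obtain j' where j': "t = ?p j'" "j < j'" "j' \<le> b" by auto
          have "?p j < ?p j'" using j' sm by (simp add: strict_mono_less)
          moreover have "?p j' \<le> ?p b" using j' sm by (simp add: strict_mono_less_eq)
          ultimately show "t \<in> {t. ?p j < t \<and> t \<le> ?p j + k \<and> chg n X t}"
            using j' b pp_range[OF n m] by auto
        qed
      qed
      moreover have "card (?p ` {j<..b}) = card {j<..b}"
        using inj by (simp add: card_image inj_on_subset)
      ultimately show ?thesis unfolding r_def by simp
    qed
    show ?thesis using True S set1 lenL cardeq by simp
  next
    case False
    have "{rs\<in>comps k. ?M rs} = {}"
    proof (rule ccontr)
      assume "{rs\<in>comps k. ?M rs} \<noteq> {}"
      then obtain rs where rs: "rs \<in> comps k" "?M rs" by auto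
      then have "?p (j + length rs) = ?p j + k"
        using match_sum[OF _ sm, of rs j] unfolding comps_def by auto
      then have "chg n X (?p j + k)" using pp_range[OF n m] by (metis rangeI)
      then show False using False by simp
    qed
    then have z: "(\<Sum>rs\<in>{rs\<in>comps k. ?M rs}. (-1::int) ^ length rs) = 0" by (simp only: sum.empty)
    show ?thesis by (simp only: S z False if_False)
  qed
qed

lemma int_card_filter: "int (card {j. j < (m::nat) \<and> P j}) = (\<Sum>j<m. if P j then 1 else 0)"
proof -
  have e: "{j. j < m \<and> P j} = {j\<in>{..<m}. P j}" by auto
  have "int (card {j\<in>{..<m}. P j}) = (\<Sum>j\<in>{j\<in>{..<m}. P j}. (1::int))" by simp
  then have "int (card {j. j < m \<and> P j}) = (\<Sum>j\<in>{j\<in>{..<m}. P j}. 1)" unfolding e .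
  also have "\<dots> = (\<Sum>j<m. if P j then 1 else 0)" by (rule sum.inter_filter) simp
  finally show ?thesis .
qed

lemma comb:
  assumes pm: "pm1_seq n X" and n: "0 < n" and k: "0 < k"
  shows "(\<Sum>rs\<in>comps k. (-1::int) ^ length rs * int (run_count n X rs))
       = (\<Sum>i<n. if chg n X i \<and> chg n X (i + k) then Xp n X i * Xp n X (i + k) else 0)"
proof (cases "length (run_starts n X) = 0")
  case True
  have "run_count n X rs = 0" for rs unfolding run_count_def Let_def True by simp
  moreover have "\<not> chg n X i" for i
  proof -
    have "run_starts n X = []" using True by simp
    then have "cset n X = {}" using rs_props(2)[of n X] by simp
    then show ?thesis using chg_iff[OF n, of X i] by simp
  qed
  ultimately show ?thesis by simp
next
  case False
  then have m: "0 < length (run_starts n X)" by simp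
  define s where "s = run_starts n X"
  define m where "m = length s"
  let ?p = "pp n X"
  let ?M = "\<lambda>j rs. \<forall>t<length rs. ?p (j + t + 1) - ?p (j + t) = rs ! t"
  define G where "G i = (if chg n X i \<and> chg n X (i + k) then Xp n X i * Xp n X (i + k) else 0)" for i
  have "(\<Sum>rs\<in>comps k. (-1::int) ^ length rs * int (run_count n X rs))
      = (\<Sum>rs\<in>comps k. \<Sum>j<m. if ?M j rs then (-1::int) ^ length rs else 0)"
  proof (rule sum.cong[OF refl])
    fix rs
    have "int (run_count n X rs) = (\<Sum>j<m. if ?M j rs then 1 else 0)"
      unfolding run_count_pp[OF n m] m_def s_def by (rule int_card_filter)
    then have "(-1::int) ^ length rs * int (run_count n X rs) = (\<Sum>j<m. (-1::int) ^ length rs * (if ?M j rs then 1 else 0))"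
      by (simp only: sum_distrib_left)
    also have "\<dots> = (\<Sum>j<m. if ?M j rs then (-1::int) ^ length rs else 0)"
      by (rule sum.cong[OF refl]) simp
    finally show "(-1::int) ^ length rs * int (run_count n X rs) = (\<Sum>j<m. if ?M j rs then (-1::int) ^ length rs else 0)" .
  qed
  also have "\<dots> = (\<Sum>j<m. \<Sum>rs\<in>comps k. if ?M j rs then (-1::int) ^ length rs else 0)"
    by (rule sum.swap[where g="\<lambda>rs j. if ?M j rs then (-1::int) ^ length rs else 0" and A="comps k" and B="{..<m}"])
  also have "\<dots> = (\<Sum>j<m. G (s ! j))"
  proof (rule sum.cong[OF refl])
    fix j assume j: "j \<in> {..<m}"
    have pj: "?p j = s ! j" using pp_small[of j n X] j unfolding m_def s_def by simp
    have cj: "chg n X (?p j)" using pp_range[OF n m] by auto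
    have A: "(\<Sum>rs\<in>comps k. if ?M j rs then (-1::int) ^ length rs else 0)
       = (if chg n X (?p j + k) then (-1) ^ card {t. ?p j < t \<and> t \<le> ?p j + k \<and> chg n X t} else 0)"
      by (rule inner[OF n m k])
    have B: "G (?p j) = (if chg n X (?p j + k) then (-1) ^ card {t. ?p j < t \<and> t \<le> ?p j + k \<and> chg n X t} else 0)"
    proof (cases "chg n X (?p j + k)")
      case True
      have "G (?p j) = Xp n X (?p j) * Xp n X (?p j + k)" unfolding G_def using True cj by simp
      also have "\<dots> = (-1) ^ card {t. ?p j < t \<and> t \<le> ?p j + k \<and> chg n X t}"
        by (rule sign_lemma[OF pm n])
      finally show ?thesis using True by simp
    next
      case False
      then show ?thesis unfolding G_def by simp
    qed
    show "(\<Sum>rs\<in>comps k. if ?M j rs then (-1::int) ^ length rs else 0) = G (s ! j)"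
      unfolding A pj B[unfolded pj] ..
  qed
  also have "\<dots> = (\<Sum>i\<in>set s. G i)"
  proof -
    have ds: "distinct s" using rs_props(3)[of n X] unfolding s_def .
    have im: "set s = (\<lambda>j. s ! j) ` {..<m}" unfolding m_def by (auto simp: in_set_conv_nth)
    have inj: "inj_on (\<lambda>j. s ! j) {..<m}" using inj_on_nth[OF ds, of "{..<m}"] unfolding m_def by simp
    show ?thesis unfolding im sum.reindex[OF inj] by simp
  qed
  also have "\<dots> = (\<Sum>i<n. G i)"
  proof (rule sum.mono_neutral_left)
    show "finite {..<n}" by simp
    show "set s \<subseteq> {..<n}" using rs_lt unfolding s_def by auto
    show "\<forall>i\<in>{..<n} - set s. G i = 0"
    proof
      fix i assume "i \<in> {..<n} - set s"
      then have "\<not> chg n X i" using chg_iff[OF n] rs_props(2)[of n X] unfolding s_def by auto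
      then show "G i = 0" unfolding G_def by simp
    qed
  qed
  finally show ?thesis unfolding G_def .
qed

lemma per_seq:
  assumes pm: "pm1_seq n X" and n: "0 < n" and k: "0 < k"
  shows "4 * (- int (run_count n X [k]) + (\<Sum>rs\<in>compositions_ge2 k. (-1) ^ length rs * int (run_count n X rs)))
     = 2 * paut n X k - paut n X (k + 1) - paut n X (k - 1)"
proof -
  have nk: "[k] \<notin> compositions_ge2 k" unfolding compositions_ge2_def by simp
  have fin: "finite (compositions_ge2 k)"
  proof -
    have "finite (insert [k] (compositions_ge2 k))" using comps_fin[of k] unfolding comps_split[OF k] .
    then show ?thesis by simp
  qed
  have sc: "(\<Sum>rs\<in>comps k. (-1::int) ^ length rs * int (run_count n X rs))
      = - int (run_count n X [k]) + (\<Sum>rs\<in>compositions_ge2 k. (-1) ^ length rs * int (run_count n X rs))"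
    unfolding comps_split[OF k] by (simp add: sum.insert[OF fin nk])
  have e: "- int (run_count n X [k]) + (\<Sum>rs\<in>compositions_ge2 k. (-1) ^ length rs * int (run_count n X rs))
     = (\<Sum>i<n. if chg n X i \<and> chg n X (i + k) then Xp n X i * Xp n X (i + k) else 0)"
    by (rule trans[OF sc[symmetric] comb[OF pm n k]])
  have k1: "1 \<le> k" using k by simp
  show ?thesis unfolding e using second_diff[OF pm n k1] .
qed

lemma nruns_paut:
  assumes pm: "pm1_seq n X" and n: "0 < n"
  shows "paut n X 1 = int n - 2 * int (nruns n X)"
proof -
  define b where "b i = (if X i \<noteq> X ((i + 1) mod n) then (1::int) else 0)" for i
  have "paut n X 1 = (\<Sum>i<n. 1 - 2 * b i)"
    unfolding paut_def
  proof (rule sum.cong[OF refl])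
    fix i assume i: "i \<in> {..<n}"
    have m: "(i + 1) mod n < n" using n by simp
    have "X i = 1 \<or> X i = -1" using pm i unfolding pm1_seq_def by simp
    moreover have "X ((i + 1) mod n) = 1 \<or> X ((i + 1) mod n) = -1"
      using pm m unfolding pm1_seq_def by blast
    ultimately show "X i * X ((i + 1) mod n) = 1 - 2 * b i" unfolding b_def by auto
  qed
  also have "\<dots> = int n - 2 * (\<Sum>i<n. b i)"
    by (simp add: sum_subtractf sum_distrib_left)
  also have "(\<Sum>i<n. b i) = int (nruns n X)"
    unfolding nruns_def b_def by (rule int_card_filter[symmetric])
  finally show ?thesis .
qed

lemma paut0:
  assumes pm: "pm1_seq n X"
  shows "paut n X 0 = int n"
proof -
  have "paut n X 0 = (\<Sum>i<n. 1)"
    unfolding paut_def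
  proof (rule sum.cong[OF refl])
    fix i assume i: "i \<in> {..<n}"
    then have "X i = 1 \<or> X i = -1" using pm unfolding pm1_seq_def by simp
    moreover have "(i + 0) mod n = i" using i by simp
    ultimately show "X i * X ((i + 0) mod n) = 1" by auto
  qed
  then show ?thesis by simp
qed

lemma sum_lin: "(\<Sum>i\<in>S. 2 * f i - g i - h i) = 2 * sum f S - sum g S - (sum h S :: int)"
  by (simp add: sum_subtractf sum_distrib_left)

theorem theorem7:
  fixes n q :: nat and c :: int and A :: "nat \<Rightarrow> nat \<Rightarrow> int"
  assumes "3 \<le> n"
    and "is_PComS n q c A"
  shows "real (\<Sum>i=1..q. nruns n (A i)) = (real n * real q - of_int c) / 2 \<and>
         real (\<Sum>i=1..q. run_count n (A i) [1]) = (real n * real q - of_int c) / 4 \<and>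
         (\<forall>k. 2 \<le> k \<and> k \<le> n - 2 \<longrightarrow>
           int (\<Sum>i=1..q. run_count n (A i) [k]) =
           (\<Sum>i=1..q. \<Sum>rs\<in>compositions_ge2 k. (-1) ^ length rs * int (run_count n (A i) rs)))"
proof -
  have n: "0 < n" using assms(1) by simp
  have pm: "\<And>i. i \<in> {1..q} \<Longrightarrow> pm1_seq n (A i)" using assms(2) unfolding is_PComS_def by blast
  have P: "\<And>k. 1 \<le> k \<Longrightarrow> k \<le> n - 1 \<Longrightarrow> (\<Sum>i=1..q. paut n (A i) k) = c"
    using assms(2) unfolding is_PComS_def by auto
  have P0: "(\<Sum>i=1..q. paut n (A i) 0) = int n * int q"
  proof -
    have "(\<Sum>i=1..q. paut n (A i) 0) = (\<Sum>i=1..q. int n)"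
      by (rule sum.cong[OF refl]) (rule paut0[OF pm])
    then show ?thesis by simp
  qed
  have P1: "(\<Sum>i=1..q. paut n (A i) 1) = c" using P[of 1] assms(1) by simp
  have P2: "(\<Sum>i=1..q. paut n (A i) 2) = c" using P[of 2] assms(1) by simp
  have "(\<Sum>i=1..q. 2 * int (nruns n (A i))) = (\<Sum>i=1..q. int n - paut n (A i) 1)"
  proof (rule sum.cong[OF refl])
    fix i assume "i \<in> {1..q}"
    show "2 * int (nruns n (A i)) = int n - paut n (A i) 1" using nruns_paut[OF pm[OF \<open>i \<in> {1..q}\<close>] n] by simp
  qed
  also have "\<dots> = int n * int q - c" using P1 by (simp add: sum_subtractf)
  finally have h1: "2 * int (\<Sum>i=1..q. nruns n (A i)) = int n * int q - c"
    by (simp add: sum_distrib_left)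
  have r1: "real (\<Sum>i=1..q. nruns n (A i)) = (real n * real q - of_int c) / 2"
  proof -
    have "real_of_int (2 * int (\<Sum>i=1..q. nruns n (A i))) = real_of_int (int n * int q - c)"
      using h1 by simp
    then show ?thesis by simp
  qed
  have e1: "compositions_ge2 1 = {}" unfolding compositions_ge2_def by auto
  have q1: "4 * (- int (run_count n (A i) [1])) = 2 * paut n (A i) 1 - paut n (A i) 2 - paut n (A i) 0"
    if "i \<in> {1..q}" for i
    using per_seq[OF pm[OF that] n, of 1] e1 by (simp add: numeral_2_eq_2)
  have "(\<Sum>i=1..q. 4 * (- int (run_count n (A i) [1])))
      = (\<Sum>i=1..q. 2 * paut n (A i) 1 - paut n (A i) 2 - paut n (A i) 0)"
    by (rule sum.cong[OF refl]) (rule q1)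
  also have "\<dots> = 2 * c - c - int n * int q"
    unfolding sum_lin P1 P2 P0 ..
  finally have h2: "4 * int (\<Sum>i=1..q. run_count n (A i) [1]) = int n * int q - c"
    by (simp add: sum_distrib_left sum_negf)
  have r2: "real (\<Sum>i=1..q. run_count n (A i) [1]) = (real n * real q - of_int c) / 4"
  proof -
    have "real_of_int (4 * int (\<Sum>i=1..q. run_count n (A i) [1])) = real_of_int (int n * int q - c)"
      using h2 by simp
    then show ?thesis by simp
  qed
  have r3: "int (\<Sum>i=1..q. run_count n (A i) [k]) =
           (\<Sum>i=1..q. \<Sum>rs\<in>compositions_ge2 k. (-1) ^ length rs * int (run_count n (A i) rs))"
    if k: "2 \<le> k" "k \<le> n - 2" for k
  proof -
    let ?G = "\<lambda>i. (\<Sum>rs\<in>compositions_ge2 k. (-1) ^ length rs * int (run_count n (A i) rs))"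
    have k0: "0 < k" using k by simp
    have "(\<Sum>i=1..q. 4 * (- int (run_count n (A i) [k]) + ?G i))
        = (\<Sum>i=1..q. 2 * paut n (A i) k - paut n (A i) (k + 1) - paut n (A i) (k - 1))"
      by (rule sum.cong[OF refl]) (rule per_seq[OF pm n k0])
    also have "\<dots> = 2 * c - c - c"
      unfolding sum_lin using P[of k] P[of "k+1"] P[of "k - 1"] k by simp
    finally have "(\<Sum>i=1..q. 4 * (- int (run_count n (A i) [k]) + ?G i)) = 0" by simp
    then have "4 * (- (\<Sum>i=1..q. int (run_count n (A i) [k])) + (\<Sum>i=1..q. ?G i)) = 0"
      by (simp only: sum_distrib_left[symmetric] sum.distrib sum_negf)
    then show ?thesis by simp
  qed
  show ?thesis using r1 r2 r3 by blast
qed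

end
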